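(* Let $L$ be a shift and $\mu$ a $\sigma$-invariant, nonatomic, regular Borel probability measure on $L$ that is positive on nonempty cylinders. Then the image measure $(\phi_\mu)_*\mu$ is Lebesgue measure on $[0,1]$, and $T_L$ preserves Lebesgue measure on $[0,1]$.
   Context: $A$ is a finite totally ordered alphabet. $A^{\mathbb N}$ has the lexicographic order and the Cantor topology, and $\sigma$ deletes the first letter. A shift is a closed $L\subseteq A^{\mathbb N}$ with $\sigma(L)\subseteq L$. For $w\le w'$ in $L$, $[w,w']=\{w''\in L:w\le w''\le w'\}$, and $w_{L,min}=\min L$. Construction. Put $\phi_\mu(w)=\mu([w_{L,min},w])$. Let $Z_0$ be the set of $x\in[0,1]$ with $|\phi_\mu^{-1}(x)|\ge 2$; each such preimage consists of exactly two consecutive words. Let $\hat I=[0,1]\sqcup Z_0^-$, where $Z_0^-=\{z^-:z\in Z_0\}$ is a disjoint copy of $Z_0$. Order $\hat I$ so that $z^-<z$ with nothing in between, extending the order of $[0,1]$, and give it the order topology. Let $\iota$ be the inclusion $[0,1]\to\hat I$, and let $\kappa:\hat I\to[0,1]$ be the identity on $[0,1]$ with $z^-\mapsto z$. Define $\phi(w)=(\phi_\mu(w))^-$ if $\phi_\mu^{-1}(\phi_\mu(w))=\{w,w'\}$ with $w<w'$, and $\phi(w)=\phi_\mu(w)$ otherwise. Set $\hat T=\phi\circ\sigma\circ\phi^{-1}$ and $T_L=\kappa\circ\hat T\circ\iota:[0,1]\to[0,1]$. *)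

theory Defs
  imports "HOL-Probability.Probability"
begin

definition shift_map :: "(nat \<Rightarrow> 'a) \<Rightarrow> (nat \<Rightarrow> 'a)" where
  "shift_map w = (\<lambda>n. w (Suc n))"

definition cyl :: "'a list \<Rightarrow> (nat \<Rightarrow> 'a) set" where
  "cyl u = {w. \<forall>i<length u. w i = u ! i}"

definition cantor_top :: "(nat \<Rightarrow> 'a) topology" where
  "cantor_top = topology_generated_by (range cyl)"

definition lex_less :: "(nat \<Rightarrow> 'a::linorder) \<Rightarrow> (nat \<Rightarrow> 'a) \<Rightarrow> bool" where
  "lex_less w w' \<longleftrightarrow> (\<exists>n. (\<forall>i<n. w i = w' i) \<and> w n < w' n)"

definition lex_le :: "(nat \<Rightarrow> 'a::linorder) \<Rightarrow> (nat \<Rightarrow> 'a) \<Rightarrow> bool" where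
  "lex_le w w' \<longleftrightarrow> w = w' \<or> lex_less w w'"

definition is_shift :: "(nat \<Rightarrow> 'a) set \<Rightarrow> bool" where
  "is_shift L \<longleftrightarrow> closedin cantor_top L \<and> shift_map ` L \<subseteq> L"

definition lex_interval :: "(nat \<Rightarrow> 'a::linorder) set \<Rightarrow> (nat \<Rightarrow> 'a) \<Rightarrow> (nat \<Rightarrow> 'a) \<Rightarrow> (nat \<Rightarrow> 'a) set" where
  "lex_interval L w w' = {v \<in> L. lex_le w v \<and> lex_le v w'}"

definition wmin :: "(nat \<Rightarrow> 'a::linorder) set \<Rightarrow> (nat \<Rightarrow> 'a)" where
  "wmin L = (THE w. w \<in> L \<and> (\<forall>v\<in>L. lex_le w v))"

definition regular_measure :: "'b topology \<Rightarrow> 'b measure \<Rightarrow> bool" where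
  "regular_measure T M \<longleftrightarrow> (\<forall>B\<in>sets M.
     emeasure M B = (SUP K\<in>{K. compactin T K \<and> K \<subseteq> B}. emeasure M K) \<and>
     emeasure M B = (INF U\<in>{U. openin T U \<and> B \<subseteq> U}. emeasure M U))"

definition phi_mu :: "(nat \<Rightarrow> 'a::linorder) set \<Rightarrow> (nat \<Rightarrow> 'a) measure \<Rightarrow> (nat \<Rightarrow> 'a) \<Rightarrow> real" where
  "phi_mu L \<mu> w = measure \<mu> (lex_interval L (wmin L) w)"

definition Z0 :: "(nat \<Rightarrow> 'a::linorder) set \<Rightarrow> (nat \<Rightarrow> 'a) measure \<Rightarrow> real set" where
  "Z0 L \<mu> = {x \<in> {0..1}. \<exists>w\<in>L. \<exists>w'\<in>L. w \<noteq> w' \<and> phi_mu L \<mu> w = x \<and> phi_mu L \<mu> w' = x}"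

text \<open>\<open>\<hat>I\<close> modelled as a subset of real \<times> bool: (x, True) is x in [0,1],
  (z, False) is the extra point z^- for z \<in> Z_0 (and (z,False) < (z,True)).\<close>
definition Ihat :: "(nat \<Rightarrow> 'a::linorder) set \<Rightarrow> (nat \<Rightarrow> 'a) measure \<Rightarrow> (real \<times> bool) set" where
  "Ihat L \<mu> = {(x, True) | x. x \<in> {0..1}} \<union> {(z, False) | z. z \<in> Z0 L \<mu>}"

definition iota :: "real \<Rightarrow> real \<times> bool" where
  "iota x = (x, True)"

definition kappa :: "real \<times> bool \<Rightarrow> real" where
  "kappa p = fst p"

definition phi_hat :: "(nat \<Rightarrow> 'a::linorder) set \<Rightarrow> (nat \<Rightarrow> 'a) measure \<Rightarrow> (nat \<Rightarrow> 'a) \<Rightarrow> real \<times> bool" where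
  "phi_hat L \<mu> w =
     (if \<exists>w'. {v \<in> L. phi_mu L \<mu> v = phi_mu L \<mu> w} = {w, w'} \<and> lex_less w w'
      then (phi_mu L \<mu> w, False) else (phi_mu L \<mu> w, True))"

definition T_hat :: "(nat \<Rightarrow> 'a::linorder) set \<Rightarrow> (nat \<Rightarrow> 'a) measure \<Rightarrow> real \<times> bool \<Rightarrow> real \<times> bool" where
  "T_hat L \<mu> = phi_hat L \<mu> \<circ> shift_map \<circ> inv_into L (phi_hat L \<mu>)"

definition T_L :: "(nat \<Rightarrow> 'a::linorder) set \<Rightarrow> (nat \<Rightarrow> 'a) measure \<Rightarrow> real \<Rightarrow> real" where
  "T_L L \<mu> = kappa \<circ> T_hat L \<mu> \<circ> iota"

end

theory Submission
  imports Defs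
begin


definition pref :: "(nat \<Rightarrow> 'a) \<Rightarrow> nat \<Rightarrow> 'a list" where
  "pref w n = map w [0..<n]"

lemma length_pref[simp]: "length (pref w n) = n" by (simp add: pref_def)

lemma mem_cyl_pref: "v \<in> cyl (pref w n) \<longleftrightarrow> (\<forall>i<n. v i = w i)"
  by (simp add: cyl_def pref_def)

lemma cyl_Nil[simp]: "cyl [] = UNIV" by (simp add: cyl_def)

lemma open_cyl_ex:
  assumes "openin cantor_top U" "w \<in> U"
  shows "\<exists>n. cyl (pref w n) \<subseteq> U"
proof -
  have "generate_topology_on (range cyl) U"
    using assms(1) by (simp add: cantor_top_def openin_topology_generated_by_iff)
  then show ?thesis using assms(2)
  proof (induction arbitrary: w)
    case Empty then show ?case by simp
  next
    case (Int a b)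
    then obtain n m where "cyl (pref w n) \<subseteq> a" "cyl (pref w m) \<subseteq> b" by blast
    then have "cyl (pref w (max n m)) \<subseteq> a \<inter> b"
      by (auto simp: mem_cyl_pref subset_iff)
    then show ?case by blast
  next
    case (UN K)
    then obtain k where "k \<in> K" "w \<in> k" by blast
    with UN obtain n where "cyl (pref w n) \<subseteq> k" by blast
    with \<open>k \<in> K\<close> show ?case by blast
  next
    case (Basis s)
    then obtain u where u: "s = cyl u" by blast
    have "cyl (pref w (length u)) \<subseteq> s"
      using Basis(2) unfolding u by (auto simp: cyl_def pref_def)
    then show ?case by blast
  qed
qed

lemma openin_cyl: "openin cantor_top (cyl u)"
  by (simp add: cantor_top_def openin_topology_generated_by_iff generate_topology_on.Basis)

lemma topspace_cantor[simp]: "topspace cantor_top = UNIV"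
  using openin_subset[OF openin_cyl[of "[]"]] by auto

lemma openI_cyl:
  assumes "\<And>w. w \<in> U \<Longrightarrow> \<exists>n. cyl (pref w n) \<subseteq> U"
  shows "openin cantor_top U"
proof -
  have "U = \<Union>{cyl u | u. cyl u \<subseteq> U}"
  proof
    show "U \<subseteq> \<Union>{cyl u | u. cyl u \<subseteq> U}"
    proof
      fix w assume "w \<in> U"
      then obtain n where "cyl (pref w n) \<subseteq> U" using assms by blast
      moreover have "w \<in> cyl (pref w n)" by (simp add: mem_cyl_pref)
      ultimately show "w \<in> \<Union>{cyl u | u. cyl u \<subseteq> U}" by blast
    qed
  qed blast
  moreover have "openin cantor_top (\<Union>{cyl u | u. cyl u \<subseteq> U})"
    by (rule openin_Union) (auto intro: openin_cyl)
  ultimately show ?thesis by simp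
qed

lemma closed_mem:
  assumes "closedin cantor_top L" "\<And>n. \<exists>v\<in>L. \<forall>i<n. v i = w i"
  shows "w \<in> L"
proof (rule ccontr)
  assume "w \<notin> L"
  have "openin cantor_top (- L)" using assms(1) by (simp add: closedin_def Compl_eq_Diff_UNIV)
  then obtain n where "cyl (pref w n) \<subseteq> - L" using open_cyl_ex \<open>w \<notin> L\<close> by blast
  moreover obtain v where "v \<in> L" "\<forall>i<n. v i = w i" using assms(2) by blast
  moreover have "v \<in> cyl (pref w n)" using \<open>\<forall>i<n. v i = w i\<close> by (simp add: mem_cyl_pref)
  ultimately show False by blast
qed

lemma lex_less_irrefl: "\<not> lex_less w w" by (auto simp: lex_less_def)

lemma lex_less_trans: assumes "lex_less u v" "lex_less v w" shows "lex_less u w"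
proof -
  obtain n where n: "\<forall>i<n. u i = v i" "u n < v n" using assms(1) by (auto simp: lex_less_def)
  obtain m where m: "\<forall>i<m. v i = w i" "v m < w m" using assms(2) by (auto simp: lex_less_def)
  show ?thesis unfolding lex_less_def
  proof (cases n m rule: linorder_cases)
    case less then show "\<exists>k. (\<forall>i<k. u i = w i) \<and> u k < w k"
      using n m by (intro exI[of _ n]) auto
  next
    case equal then show "\<exists>k. (\<forall>i<k. u i = w i) \<and> u k < w k"
      using n m by (intro exI[of _ n]) auto
  next
    case greater then show "\<exists>k. (\<forall>i<k. u i = w i) \<and> u k < w k"
      using n m by (intro exI[of _ m]) auto
  qed
qed

lemma lex_less_asym: "lex_less u v \<Longrightarrow> \<not> lex_less v u"
  using lex_less_trans lex_less_irrefl by blast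

lemma lex_less_total: assumes "u \<noteq> v" shows "lex_less u v \<or> lex_less v u"
proof -
  have "\<exists>i. u i \<noteq> v i" using assms by auto
  define n where "n = (LEAST i. u i \<noteq> v i)"
  have 1: "u n \<noteq> v n" unfolding n_def by (rule LeastI_ex) fact
  have 2: "\<forall>i<n. u i = v i" unfolding n_def using not_less_Least by blast
  from 1 consider "u n < v n" | "v n < u n" by fastforce
  then show ?thesis
  proof cases
    case 1 then show ?thesis unfolding lex_less_def using 2 by (intro disjI1 exI[of _ n]) auto
  next
    case 2 then show ?thesis unfolding lex_less_def using \<open>\<forall>i<n. u i = v i\<close> by (intro disjI2 exI[of _ n]) auto
  qed
qed

lemma lex_le_refl[simp]: "lex_le w w" by (simp add: lex_le_def)
lemma lex_le_trans: "lex_le u v \<Longrightarrow> lex_le v w \<Longrightarrow> lex_le u w"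
  unfolding lex_le_def using lex_less_trans by blast
lemma lex_le_antisym: "lex_le u v \<Longrightarrow> lex_le v u \<Longrightarrow> u = v"
  unfolding lex_le_def using lex_less_asym by blast
lemma lex_le_total: "lex_le u v \<or> lex_le v u"
  unfolding lex_le_def using lex_less_total by blast
lemma not_lex_le: "\<not> lex_le u v \<longleftrightarrow> lex_less v u"
  unfolding lex_le_def using lex_less_total lex_less_asym lex_less_irrefl by blast
lemma lex_less_le_trans: "lex_less u v \<Longrightarrow> lex_le v w \<Longrightarrow> lex_less u w"
  unfolding lex_le_def using lex_less_trans by blast
lemma lex_le_less_trans: "lex_le u v \<Longrightarrow> lex_less v w \<Longrightarrow> lex_less u w"
  unfolding lex_le_def using lex_less_trans by blast
lemma lex_less_imp_le: "lex_less u v \<Longrightarrow> lex_le u v" by (simp add: lex_le_def)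

lemma between_pref:
  assumes "\<forall>i<n. u i = w i" "lex_le u v" "lex_le v w"
  shows "\<forall>i<n. v i = w i"
proof (rule ccontr)
  assume "\<not> (\<forall>i<n. v i = w i)"
  then have "\<exists>i. i < n \<and> v i \<noteq> w i" by auto
  define k where "k = (LEAST i. i < n \<and> v i \<noteq> w i)"
  have k0: "k < n \<and> v k \<noteq> w k" unfolding k_def by (rule LeastI_ex) fact
  then have k: "k < n" "v k \<noteq> w k" by auto
  have kk: "\<forall>i<k. v i = w i"
  proof (intro allI impI)
    fix i assume "i < k"
    then have "\<not> (i < n \<and> v i \<noteq> w i)" unfolding k_def by (rule not_less_Least)
    then show "v i = w i" using \<open>i < k\<close> k(1) by simp
  qed
  show False
  proof (cases "v k < w k")
    case True
    then have "lex_less v u" using kk k assms(1) unfolding lex_less_def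
      by (intro exI[of _ k]) auto
    then show False using assms(2) not_lex_le by blast
  next
    case False
    then have "w k < v k" using k(2) by auto
    then have "lex_less w v" using kk unfolding lex_less_def by (intro exI[of _ k]) auto
    then show False using assms(3) not_lex_le by blast
  qed
qed

primrec glist :: "('a list \<Rightarrow> 'a) \<Rightarrow> nat \<Rightarrow> 'a list" where
  "glist f 0 = []"
| "glist f (Suc n) = glist f n @ [f (glist f n)]"

definition gword :: "('a list \<Rightarrow> 'a) \<Rightarrow> nat \<Rightarrow> 'a" where
  "gword f n = f (glist f n)"

lemma length_glist[simp]: "length (glist f n) = n" by (induction n) auto

lemma glist_nth: "i < n \<Longrightarrow> glist f n ! i = gword f i"
proof (induction n)
  case (Suc n) then show ?case
    by (cases "i = n") (auto simp: nth_append gword_def)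
qed simp

lemma pref_gword: "pref (gword f) n = glist f n"
  by (rule nth_equalityI) (auto simp: pref_def glist_nth)

lemma greedy:
  assumes "P []" "\<And>u. P u \<Longrightarrow> P (u @ [f u])"
  shows "P (pref (gword f) n)"
  unfolding pref_gword by (induction n) (auto intro: assms)



lemma cyl_snoc: "v \<in> cyl (u @ [a]) \<longleftrightarrow> v \<in> cyl u \<and> v (length u) = a"
  by (auto simp: cyl_def nth_append less_Suc_eq)

lemma mem_cyl_self: "v \<in> cyl u \<Longrightarrow> v \<in> cyl (pref v (length u))"
  by (simp add: mem_cyl_pref)

lemma cyl_pref_eq: "v \<in> cyl u \<Longrightarrow> cyl (pref v (length u)) = cyl u"
  by (auto simp: cyl_def pref_def)

definition supw :: "(nat \<Rightarrow> 'a::{linorder,finite}) set \<Rightarrow> nat \<Rightarrow> 'a" where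
  "supw S = gword (\<lambda>u. Max {a. \<exists>v\<in>S. v \<in> cyl (u @ [a])})"

definition infw :: "(nat \<Rightarrow> 'a::{linorder,finite}) set \<Rightarrow> nat \<Rightarrow> 'a" where
  "infw S = gword (\<lambda>u. Min {a. \<exists>v\<in>S. v \<in> cyl (u @ [a])})"

lemma gword_pref: "gword f n = f (pref (gword f) n)"
  by (simp add: gword_def pref_gword)

lemma supw_props:
  fixes S :: "(nat \<Rightarrow> 'a::{linorder,finite}) set"
  assumes "S \<noteq> {}"
  shows "\<forall>n. \<exists>v\<in>S. \<forall>i<n. v i = supw S i" "\<forall>v\<in>S. lex_le v (supw S)"
proof -
  define f where "f = (\<lambda>u. Max {a::'a. \<exists>v\<in>S. v \<in> cyl (u @ [a])})"
  let ?P = "\<lambda>u. \<exists>v\<in>S. v \<in> cyl u"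
  have step: "?P (u @ [f u])" if "?P u" for u
  proof -
    from that obtain v where v: "v \<in> S" "v \<in> cyl u" by blast
    then have "v (length u) \<in> {a. \<exists>v\<in>S. v \<in> cyl (u @ [a])}" by (auto simp: cyl_snoc)
    then have "f u \<in> {a. \<exists>v\<in>S. v \<in> cyl (u @ [a])}" unfolding f_def
      by (intro Max_in) auto
    then show ?thesis by auto
  qed
  have P0: "?P []" using assms by auto
  have w: "supw S = gword f" by (simp add: supw_def f_def)
  have cl: "?P (pref (supw S) n)" for n unfolding w by (rule greedy[of ?P, OF P0 step])
  then show "\<forall>n. \<exists>v\<in>S. \<forall>i<n. v i = supw S i" by (auto simp: mem_cyl_pref)
  show "\<forall>v\<in>S. lex_le v (supw S)"
  proof
    fix v assume "v \<in> S"
    show "lex_le v (supw S)"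
    proof (rule ccontr)
      assume "\<not> lex_le v (supw S)"
      then obtain n where n: "\<forall>i<n. supw S i = v i" "supw S n < v n"
        by (auto simp: not_lex_le lex_less_def)
      have "v \<in> cyl (pref (supw S) n @ [v n])"
        using n(1) by (auto simp: cyl_snoc mem_cyl_pref)
      then have "v n \<le> f (pref (supw S) n)" unfolding f_def
        using \<open>v \<in> S\<close> by (intro Max_ge) auto
      also have "f (pref (supw S) n) = supw S n" unfolding w by (rule gword_pref[symmetric])
      finally show False using n(2) by simp
    qed
  qed
qed

lemma infw_props:
  fixes S :: "(nat \<Rightarrow> 'a::{linorder,finite}) set"
  assumes "S \<noteq> {}"
  shows "\<forall>n. \<exists>v\<in>S. \<forall>i<n. v i = infw S i" "\<forall>v\<in>S. lex_le (infw S) v"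
proof -
  define f where "f = (\<lambda>u. Min {a::'a. \<exists>v\<in>S. v \<in> cyl (u @ [a])})"
  let ?P = "\<lambda>u. \<exists>v\<in>S. v \<in> cyl u"
  have step: "?P (u @ [f u])" if "?P u" for u
  proof -
    from that obtain v where v: "v \<in> S" "v \<in> cyl u" by blast
    then have "v (length u) \<in> {a. \<exists>v\<in>S. v \<in> cyl (u @ [a])}" by (auto simp: cyl_snoc)
    then have "f u \<in> {a. \<exists>v\<in>S. v \<in> cyl (u @ [a])}" unfolding f_def
      by (intro Min_in) auto
    then show ?thesis by auto
  qed
  have P0: "?P []" using assms by auto
  have w: "infw S = gword f" by (simp add: infw_def f_def)
  have cl: "?P (pref (infw S) n)" for n unfolding w by (rule greedy[of ?P, OF P0 step])
  then show "\<forall>n. \<exists>v\<in>S. \<forall>i<n. v i = infw S i" by (auto simp: mem_cyl_pref)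
  show "\<forall>v\<in>S. lex_le (infw S) v"
  proof
    fix v assume "v \<in> S"
    show "lex_le (infw S) v"
    proof (rule ccontr)
      assume "\<not> lex_le (infw S) v"
      then obtain n where n: "\<forall>i<n. v i = infw S i" "v n < infw S n"
        by (auto simp: not_lex_le lex_less_def)
      have "v \<in> cyl (pref (infw S) n @ [v n])"
        using n(1) by (auto simp: cyl_snoc mem_cyl_pref)
      then have "f (pref (infw S) n) \<le> v n" unfolding f_def
        using \<open>v \<in> S\<close> by (intro Min_le) auto
      also have "f (pref (infw S) n) = infw S n" unfolding w by (rule gword_pref[symmetric])
      finally show False using n(2) by simp
    qed
  qed
qed

lemma open_lex_gt: "openin cantor_top {v. lex_less w v}"
proof (rule openI_cyl)
  fix v assume "v \<in> {v. lex_less w v}"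
  then obtain n where n: "\<forall>i<n. w i = v i" "w n < v n" by (auto simp: lex_less_def)
  have "cyl (pref v (Suc n)) \<subseteq> {v. lex_less w v}"
  proof
    fix x assume "x \<in> cyl (pref v (Suc n))"
    then have "\<forall>i<Suc n. x i = v i" by (simp add: mem_cyl_pref)
    then show "x \<in> {v. lex_less w v}" using n unfolding lex_less_def
      by (intro CollectI exI[of _ n]) auto
  qed
  then show "\<exists>n. cyl (pref v n) \<subseteq> {v. lex_less w v}" by blast
qed

lemma open_lex_lt: "openin cantor_top {v. lex_less v w}"
proof (rule openI_cyl)
  fix v assume "v \<in> {v. lex_less v w}"
  then obtain n where n: "\<forall>i<n. v i = w i" "v n < w n" by (auto simp: lex_less_def)
  have "cyl (pref v (Suc n)) \<subseteq> {v. lex_less v w}"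
  proof
    fix x assume "x \<in> cyl (pref v (Suc n))"
    then have "\<forall>i<Suc n. x i = v i" by (simp add: mem_cyl_pref)
    then show "x \<in> {v. lex_less v w}" using n unfolding lex_less_def
      by (intro CollectI exI[of _ n]) auto
  qed
  then show "\<exists>n. cyl (pref v n) \<subseteq> {v. lex_less v w}" by blast
qed

lemma open_shift_pre:
  assumes "openin cantor_top V" shows "openin cantor_top (shift_map -` V)"
proof (rule openI_cyl)
  fix w assume "w \<in> shift_map -` V"
  then obtain n where "cyl (pref (shift_map w) n) \<subseteq> V" using open_cyl_ex[OF assms] by blast
  then have "cyl (pref w (Suc n)) \<subseteq> shift_map -` V"
    by (auto simp: mem_cyl_pref shift_map_def subset_iff)
  then show "\<exists>n. cyl (pref w n) \<subseteq> shift_map -` V" by blast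
qed

lemma open_Union_cyl:
  assumes "openin cantor_top V" shows "V = (\<Union>u\<in>{u. cyl u \<subseteq> V}. cyl u)"
proof
  show "V \<subseteq> (\<Union>u\<in>{u. cyl u \<subseteq> V}. cyl u)"
  proof
    fix w assume "w \<in> V"
    then obtain n where "cyl (pref w n) \<subseteq> V" using open_cyl_ex[OF assms] by blast
    moreover have "w \<in> cyl (pref w n)" by (simp add: mem_cyl_pref)
    ultimately show "w \<in> (\<Union>u\<in>{u. cyl u \<subseteq> V}. cyl u)" by blast
  qed
qed blast

locale shiftsetup =
  fixes L :: "(nat \<Rightarrow> 'a::{linorder,finite}) set"
    and \<mu> :: "(nat \<Rightarrow> 'a) measure"
  assumes shift: "is_shift L"
    and space: "space \<mu> = L"
    and borel: "sets \<mu> = sigma_sets L {U. openin (subtopology cantor_top L) U}"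
    and prob: "prob_space \<mu>"
    and invariant: "\<forall>B\<in>sets \<mu>. emeasure \<mu> (shift_map -` B \<inter> L) = emeasure \<mu> B"
    and nonatomic: "\<forall>w\<in>L. emeasure \<mu> {w} = 0"
    and pos_cyl: "\<forall>u. L \<inter> cyl u \<noteq> {} \<longrightarrow> emeasure \<mu> (L \<inter> cyl u) > 0"
begin

sublocale P: prob_space \<mu> by (rule prob)

lemma closedL: "closedin cantor_top L" using shift by (simp add: is_shift_def)
lemma shiftL: "w \<in> L \<Longrightarrow> shift_map w \<in> L" using shift by (auto simp: is_shift_def)
lemma L_ne: "L \<noteq> {}" using P.not_empty space by simp

lemma closure_L: "(\<And>n. \<exists>v\<in>L. \<forall>i<n. v i = w i) \<Longrightarrow> w \<in> L"
  by (rule closed_mem[OF closedL])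

lemma openL: "openin cantor_top V \<Longrightarrow> V \<inter> L \<in> sets \<mu>"
  unfolding borel by (rule sigma_sets.Basic) (auto simp: openin_subtopology)

lemma cylS: "L \<inter> cyl u \<in> sets \<mu>"
  using openL[OF openin_cyl[of u]] by (simp add: Int_commute)

definition D where "D w = {v\<in>L. lex_le v w}"

lemma D_sets: "D w \<in> sets \<mu>"
proof -
  have "D w = space \<mu> - ({v. lex_less w v} \<inter> L)"
    using not_lex_le unfolding D_def space by blast
  then show ?thesis using openL[OF open_lex_gt] by auto
qed

lemma wmin_props: "wmin L \<in> L" "\<forall>v\<in>L. lex_le (wmin L) v"
proof -
  have ex: "infw L \<in> L \<and> (\<forall>v\<in>L. lex_le (infw L) v)"
    using infw_props[OF L_ne] closure_L by metis
  have "wmin L = infw L" unfolding wmin_def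
    by (rule the_equality) (use ex lex_le_antisym in blast)+
  then show "wmin L \<in> L" "\<forall>v\<in>L. lex_le (wmin L) v" using ex by auto
qed

lemma phi_eq: "phi_mu L \<mu> w = measure \<mu> (D w)"
proof -
  have "lex_interval L (wmin L) w = D w"
    using wmin_props by (auto simp: lex_interval_def D_def)
  then show ?thesis by (simp add: phi_mu_def)
qed

abbreviation "\<phi> \<equiv> phi_mu L \<mu>"

lemma phi_mono: "lex_le v w \<Longrightarrow> \<phi> v \<le> \<phi> w"
  unfolding phi_eq by (intro P.finite_measure_mono D_sets) (auto simp: D_def intro: lex_le_trans)

lemma phi_ge0: "0 \<le> \<phi> w" by (simp add: phi_eq)
lemma phi_le1: "\<phi> w \<le> 1" by (simp add: phi_eq)

lemma phi_diff: "lex_le v w \<Longrightarrow> \<phi> w - \<phi> v = measure \<mu> (D w - D v)"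
  unfolding phi_eq
  using D_sets[of v] D_sets[of w]
  by (subst P.finite_measure_Diff) (auto simp: D_def intro: lex_le_trans)

lemma phi_top: "\<forall>v\<in>L. lex_le v w \<Longrightarrow> \<phi> w = 1"
proof -
  assume "\<forall>v\<in>L. lex_le v w"
  then have "D w = space \<mu>" by (auto simp: D_def space)
  then show ?thesis by (simp add: phi_eq P.prob_space)
qed

lemma sing_sets: "{w} \<inter> L \<in> sets \<mu>"
proof (cases "w \<in> L")
  case True
  have "{w} \<inter> L = (\<Inter>n. L \<inter> cyl (pref w n))"
  proof
    show "(\<Inter>n. L \<inter> cyl (pref w n)) \<subseteq> {w} \<inter> L"
    proof
      fix x assume "x \<in> (\<Inter>n. L \<inter> cyl (pref w n))"
      then have "x \<in> L" "\<forall>n. \<forall>i<n. x i = w i" by (auto simp: mem_cyl_pref)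
      then have "x = w" by (auto intro!: ext)
      then show "x \<in> {w} \<inter> L" using \<open>x \<in> L\<close> by simp
    qed
  qed (auto simp: mem_cyl_pref)
  moreover have "(\<Inter>n. L \<inter> cyl (pref w n)) \<in> sets \<mu>"
    using cylS by (intro sets.countable_INT') auto
  ultimately show ?thesis by simp
qed simp

lemma measure_sing: "measure \<mu> ({w} \<inter> L) = 0"
proof (cases "w \<in> L")
  case True then show ?thesis using nonatomic by (simp add: measure_def Int_absorb2)
qed simp

lemma phi_cont:
  assumes "\<forall>i<n. v i = w i"
  shows "\<bar>\<phi> v - \<phi> w\<bar> \<le> measure \<mu> (L \<inter> cyl (pref w n))"
proof (cases "lex_le v w")
  case True
  have "D w - D v \<subseteq> L \<inter> cyl (pref w n)"
  proof
    fix u assume "u \<in> D w - D v"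
    then have "u \<in> L" "lex_le v u" "lex_le u w" by (auto simp: D_def not_lex_le lex_less_imp_le)
    then show "u \<in> L \<inter> cyl (pref w n)" using between_pref[OF assms] by (simp add: mem_cyl_pref)
  qed
  then have "measure \<mu> (D w - D v) \<le> measure \<mu> (L \<inter> cyl (pref w n))"
    by (intro P.finite_measure_mono cylS)
  then show ?thesis using phi_diff[OF True] phi_mono[OF True] by simp
next
  case False
  then have F: "lex_le w v" using lex_le_total by blast
  have pe: "pref w n = pref v n" using assms by (simp add: pref_def)
  have "D v - D w \<subseteq> L \<inter> cyl (pref w n)"
  proof
    fix u assume "u \<in> D v - D w"
    then have "u \<in> L" "lex_le w u" "lex_le u v" by (auto simp: D_def not_lex_le lex_less_imp_le)
    then show "u \<in> L \<inter> cyl (pref w n)" using between_pref[of n w v u] assms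
      by (simp add: mem_cyl_pref)
  qed
  then have "measure \<mu> (D v - D w) \<le> measure \<mu> (L \<inter> cyl (pref w n))"
    by (intro P.finite_measure_mono cylS)
  then show ?thesis using phi_diff[OF F] phi_mono[OF F] by simp
qed

lemma cyl_lim:
  assumes "w \<in> L"
  shows "(\<lambda>n. measure \<mu> (L \<inter> cyl (pref w n))) \<longlonglongrightarrow> 0"
proof -
  have "(\<lambda>n. measure \<mu> (L \<inter> cyl (pref w n))) \<longlonglongrightarrow> measure \<mu> (\<Inter>n. L \<inter> cyl (pref w n))"
    by (rule P.finite_Lim_measure_decseq) (auto simp: cylS decseq_def mem_cyl_pref)
  also have "(\<Inter>n. L \<inter> cyl (pref w n)) = {w} \<inter> L"
  proof
    show "(\<Inter>n. L \<inter> cyl (pref w n)) \<subseteq> {w} \<inter> L"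
    proof
      fix x assume "x \<in> (\<Inter>n. L \<inter> cyl (pref w n))"
      then have "x \<in> L" "\<forall>n. \<forall>i<n. x i = w i" by (auto simp: mem_cyl_pref)
      then have "x = w" by (auto intro!: ext)
      then show "x \<in> {w} \<inter> L" using \<open>x \<in> L\<close> by simp
    qed
  qed (use assms in \<open>auto simp: mem_cyl_pref\<close>)
  finally show ?thesis by (simp add: measure_sing)
qed

end


context shiftsetup begin

lemma gap:
  assumes "u \<in> L" "v \<in> L" "w \<in> L" "lex_less u v" "lex_less v w"
  shows "\<phi> u < \<phi> w"
proof -
  obtain n where n: "\<forall>i<n. u i = v i" "u n < v n" using assms(4) by (auto simp: lex_less_def)
  obtain m where m: "\<forall>i<m. v i = w i" "v m < w m" using assms(5) by (auto simp: lex_less_def)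
  define N where "N = Suc (max n m)"
  have sub: "L \<inter> cyl (pref v N) \<subseteq> D w - D u"
  proof
    fix x assume x: "x \<in> L \<inter> cyl (pref v N)"
    then have xv: "\<forall>i<N. x i = v i" by (simp add: mem_cyl_pref)
    have "lex_less u x" unfolding lex_less_def using n xv N_def
      by (intro exI[of _ n]) auto
    moreover have "lex_less x w" unfolding lex_less_def using m xv N_def
      by (intro exI[of _ m]) auto
    ultimately show "x \<in> D w - D u" using x
      by (auto simp: D_def not_lex_le lex_less_imp_le)
  qed
  have "v \<in> L \<inter> cyl (pref v N)" using assms(2) by (simp add: mem_cyl_pref)
  then have "emeasure \<mu> (L \<inter> cyl (pref v N)) > 0" using pos_cyl by blast
  then have "measure \<mu> (L \<inter> cyl (pref v N)) > 0"
    by (simp add: P.emeasure_eq_measure)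
  also have "measure \<mu> (L \<inter> cyl (pref v N)) \<le> measure \<mu> (D w - D u)"
    using sub D_sets by (intro P.finite_measure_mono) auto
  also have "\<dots> = \<phi> w - \<phi> u"
    using phi_diff[of u w] assms(4,5) lex_less_trans lex_less_imp_le by metis
  finally show ?thesis by simp
qed

lemma pre2:
  assumes "u \<in> L" "w \<in> L" "lex_less u w" "\<phi> u = \<phi> w" "v \<in> L" "\<phi> v = \<phi> u"
  shows "v = u \<or> v = w"
proof (rule ccontr)
  assume "\<not> (v = u \<or> v = w)"
  then have "(lex_less v u) \<or> (lex_less u v \<and> lex_less v w) \<or> lex_less w v"
    using lex_less_total by blast
  then show False
  proof (elim disjE conjE)
    assume "lex_less v u" then show False using gap[of v u w] assms by simp
  next
    assume "lex_less u v" "lex_less v w" then show False using gap[of u v w] assms by simp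
  next
    assume "lex_less w v" then show False using gap[of u w v] assms by simp
  qed
qed

lemma phi_wmin: "\<phi> (wmin L) = 0"
proof -
  have "D (wmin L) = {wmin L} \<inter> L"
    using wmin_props lex_le_antisym by (auto simp: D_def)
  then show ?thesis by (simp add: phi_eq measure_sing)
qed

lemma wx_ex:
  assumes x: "0 \<le> x" "x \<le> 1"
  shows "\<exists>w\<in>L. \<phi> w = x \<and> (\<forall>v\<in>L. \<phi> v \<le> x \<longrightarrow> lex_le v w)"
proof -
  define S where "S = {v\<in>L. \<phi> v \<le> x}"
  have Sne: "S \<noteq> {}" using wmin_props phi_wmin x unfolding S_def by auto
  define w where "w = supw S"
  have cl: "\<forall>n. \<exists>v\<in>S. \<forall>i<n. v i = w i" and ub: "\<forall>v\<in>S. lex_le v w"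
    using supw_props[OF Sne] by (auto simp: w_def)
  have wL: "w \<in> L" using cl by (intro closure_L) (auto simp: S_def)
  let ?e = "\<lambda>n. measure \<mu> (L \<inter> cyl (pref w n))"
  have e0: "?e \<longlonglongrightarrow> 0" by (rule cyl_lim[OF wL])
  have le: "\<phi> w \<le> x"
  proof -
    have "\<phi> w \<le> x + ?e n" for n
    proof -
      obtain v where v: "v \<in> S" "\<forall>i<n. v i = w i" using cl by blast
      have "\<bar>\<phi> v - \<phi> w\<bar> \<le> ?e n" by (rule phi_cont[OF v(2)])
      then show ?thesis using v(1) by (auto simp: S_def)
    qed
    moreover have "(\<lambda>n. x + ?e n) \<longlonglongrightarrow> x" using tendsto_add[OF tendsto_const e0] by simp
    ultimately show ?thesis by (intro LIMSEQ_le_const[of "\<lambda>n. x + ?e n"]) auto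
  qed
  have ge: "x \<le> \<phi> w"
  proof (cases "{v\<in>L. lex_less w v} = {}")
    case True
    then have "\<forall>v\<in>L. lex_le v w" using not_lex_le by blast
    then show ?thesis using phi_top x by simp
  next
    case False
    define U where "U = {v\<in>L. lex_less w v}"
    have Une: "U \<noteq> {}" using False by (simp add: U_def)
    define t where "t = infw U"
    have clt: "\<forall>n. \<exists>v\<in>U. \<forall>i<n. v i = t i" and lb: "\<forall>v\<in>U. lex_le t v"
      using infw_props[OF Une] by (auto simp: t_def)
    have tL: "t \<in> L" using clt by (intro closure_L) (auto simp: U_def)
    have Ugt: "v \<in> U \<Longrightarrow> x < \<phi> v" for v
    proof (rule ccontr)
      assume "v \<in> U" "\<not> x < \<phi> v"
      then have "v \<in> S" by (auto simp: S_def U_def)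
      then have "lex_le v w" using ub by blast
      then show False using \<open>v \<in> U\<close> by (auto simp: U_def not_lex_le[symmetric])
    qed
    have wt: "lex_le w t"
    proof (rule ccontr)
      assume "\<not> lex_le w t"
      then obtain k where k: "\<forall>i<k. t i = w i" "t k < w k" by (auto simp: not_lex_le lex_less_def)
      obtain v where v: "v \<in> U" "\<forall>i<Suc k. v i = t i" using clt by blast
      have "lex_less v w" unfolding lex_less_def using k v(2) by (intro exI[of _ k]) auto
      then show False using v(1) lex_less_asym by (auto simp: U_def)
    qed
    show ?thesis
    proof (cases "t = w")
      case True
      have "x \<le> \<phi> w + ?e n" for n
      proof -
        obtain v where v: "v \<in> U" "\<forall>i<n. v i = w i" using clt True by blast
        have "\<bar>\<phi> v - \<phi> w\<bar> \<le> ?e n" by (rule phi_cont[OF v(2)])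
        then show ?thesis using Ugt[OF v(1)] by auto
      qed
      moreover have "(\<lambda>n. \<phi> w + ?e n) \<longlonglongrightarrow> \<phi> w" using tendsto_add[OF tendsto_const e0] by simp
      ultimately show ?thesis by (intro LIMSEQ_le_const[of "\<lambda>n. \<phi> w + ?e n"]) auto
    next
      case False
      then have wlt: "lex_less w t" using wt by (simp add: lex_le_def eq_commute)
      then have tU: "t \<in> U" using tL by (simp add: U_def)
      have "D t - D w \<subseteq> {t} \<inter> L"
      proof
        fix u assume "u \<in> D t - D w"
        then have "u \<in> L" "lex_less w u" "lex_le u t" by (auto simp: D_def not_lex_le)
        then have "u \<in> U" by (simp add: U_def)
        then have "lex_le t u" using lb by blast
        then have "u = t" using \<open>lex_le u t\<close> lex_le_antisym by blast
        then show "u \<in> {t} \<inter> L" using tL by simp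
      qed
      then have "measure \<mu> (D t - D w) \<le> measure \<mu> ({t} \<inter> L)"
        using D_sets sing_sets by (intro P.finite_measure_mono) auto
      then have "\<phi> t - \<phi> w \<le> 0" using phi_diff[OF wt] measure_sing by simp
      then show ?thesis using Ugt[OF tU] by simp
    qed
  qed
  show ?thesis
  proof (intro bexI[OF _ wL] conjI ballI impI)
    show "\<phi> w = x" using le ge by simp
    fix v assume "v \<in> L" "\<phi> v \<le> x"
    then show "lex_le v w" using ub by (auto simp: S_def)
  qed
qed

lemma phi_le_set:
  "{v\<in>space \<mu>. \<phi> v \<le> a} \<in> sets \<mu>"
proof (cases "a < 0")
  case True
  then have e: "{v\<in>space \<mu>. \<phi> v \<le> a} = {}" using phi_ge0 by (auto simp: not_le intro: less_le_trans)
  show ?thesis by (simp only: e sets.empty_sets)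
next
  case False
  show ?thesis
  proof (cases "1 \<le> a")
    case True
    then have e: "{v\<in>space \<mu>. \<phi> v \<le> a} = space \<mu>" using phi_le1 by (auto intro: order_trans)
    show ?thesis by (simp only: e sets.top)
  next
    case False2: False
    then obtain w where w: "w \<in> L" "\<phi> w = a" "\<forall>v\<in>L. \<phi> v \<le> a \<longrightarrow> lex_le v w"
      using wx_ex[of a] \<open>\<not> a < 0\<close> by auto
    have "{v\<in>space \<mu>. \<phi> v \<le> a} = D w"
      using w phi_mono by (auto simp: D_def space)
    then show ?thesis using D_sets by simp
  qed
qed

lemma phi_meas: "\<phi> \<in> borel_measurable \<mu>"
  using phi_le_set by (simp add: borel_measurable_iff_le)

lemma phi_meas01: "\<phi> \<in> measurable \<mu> (restrict_space lborel {0..1})"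
  by (intro measurable_restrict_space2) (auto simp: phi_ge0 phi_le1 phi_meas measurable_lborel2)

lemma cdf_phi:
  assumes "0 \<le> x" "x \<le> 1"
  shows "measure \<mu> {v\<in>space \<mu>. \<phi> v \<le> x} = x"
proof -
  obtain w where w: "w \<in> L" "\<phi> w = x" "\<forall>v\<in>L. \<phi> v \<le> x \<longrightarrow> lex_le v w"
    using wx_ex[OF assms] by auto
  have "{v\<in>space \<mu>. \<phi> v \<le> x} = D w"
    using w phi_mono by (auto simp: D_def space)
  then show ?thesis using w(2) by (simp add: phi_eq)
qed

end


context shiftsetup begin

definition psi where "psi x = inv_into L (phi_hat L \<mu>) (x, True)"

lemma fst_phi_hat: "fst (phi_hat L \<mu> w) = \<phi> w"
  by (simp add: phi_hat_def)

lemma psi_props: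
  assumes x: "0 \<le> x" "x \<le> 1"
  shows "psi x \<in> L" "\<phi> (psi x) = x" "\<forall>v\<in>L. \<phi> v \<le> x \<longrightarrow> lex_le v (psi x)"
proof -
  obtain w where w: "w \<in> L" "\<phi> w = x" "\<forall>v\<in>L. \<phi> v \<le> x \<longrightarrow> lex_le v w"
    using wx_ex[OF x] by auto
  have nc: "\<not> (\<exists>w'. {v \<in> L. \<phi> v = \<phi> w} = {w, w'} \<and> lex_less w w')"
  proof
    assume "\<exists>w'. {v \<in> L. \<phi> v = \<phi> w} = {w, w'} \<and> lex_less w w'"
    then obtain w' where w': "{v \<in> L. \<phi> v = \<phi> w} = {w, w'}" "lex_less w w'" by blast
    then have "w' \<in> L" "\<phi> w' = x" using w(2) by blast+
    then have "lex_le w' w" using w(3) by simp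
    then show False using w'(2) not_lex_le by blast
  qed
  have hw: "phi_hat L \<mu> w = (x, True)" using nc w(2) by (simp add: phi_hat_def)
  then have img: "(x, True) \<in> phi_hat L \<mu> ` L" using w(1) by force
  show pL: "psi x \<in> L" unfolding psi_def by (rule inv_into_into[OF img])
  have hp: "phi_hat L \<mu> (psi x) = (x, True)" unfolding psi_def by (rule f_inv_into_f[OF img])
  show px: "\<phi> (psi x) = x" using arg_cong[OF hp, of fst] by (simp add: fst_phi_hat)
  show "\<forall>v\<in>L. \<phi> v \<le> x \<longrightarrow> lex_le v (psi x)"
  proof (intro ballI impI)
    fix v assume v: "v \<in> L" "\<phi> v \<le> x"
    show "lex_le v (psi x)"
    proof (rule ccontr)
      assume "\<not> lex_le v (psi x)"
      then have "lex_less (psi x) v" by (simp add: not_lex_le)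
      moreover have "lex_le v w" using w(3) v by simp
      ultimately have lt: "lex_less (psi x) w" by (rule lex_less_le_trans)
      have eq: "{u \<in> L. \<phi> u = \<phi> (psi x)} = {psi x, w}"
      proof (intro equalityI subsetI)
        fix u assume "u \<in> {u \<in> L. \<phi> u = \<phi> (psi x)}"
        then have "u \<in> L" "\<phi> u = \<phi> (psi x)" by auto
        then have "u = psi x \<or> u = w" using pre2[OF pL w(1) lt] px w(2) by simp
        then show "u \<in> {psi x, w}" by simp
      next
        fix u assume "u \<in> {psi x, w}"
        then show "u \<in> {u \<in> L. \<phi> u = \<phi> (psi x)}" using pL w(1,2) px by auto
      qed
      then have "phi_hat L \<mu> (psi x) = (\<phi> (psi x), False)"
        using lt unfolding phi_hat_def by auto
      then show False using hp by simp
    qed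
  qed
qed

lemma T_L_eq: "T_L L \<mu> x = \<phi> (shift_map (psi x))"
  by (simp add: T_L_def T_hat_def kappa_def iota_def psi_def fst_phi_hat)

lemma psi_mono: "0 \<le> a \<Longrightarrow> a \<le> b \<Longrightarrow> b \<le> 1 \<Longrightarrow> lex_le (psi a) (psi b)"
  using psi_props[of a] psi_props[of b] by auto

abbreviation "R \<equiv> restrict_space lborel {0..1::real}"

lemma sets_R_iff: "A \<in> sets R \<longleftrightarrow> A \<subseteq> {0..1} \<and> A \<in> sets borel"
  by (subst sets_restrict_space_iff) auto

lemma space_R: "space R = {0..1}" by (simp add: space_restrict_space)

lemma psi_meas: "psi \<in> measurable R \<mu>"
proof (rule measurable_sigma_sets[OF borel])
  show "{U. openin (subtopology cantor_top L) U} \<subseteq> Pow L"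
    using openin_subset by fastforce
  show "psi \<in> space R \<rightarrow> L" using psi_props by (auto simp: space_R)
  fix y assume "y \<in> {U. openin (subtopology cantor_top L) U}"
  then obtain V where V: "openin cantor_top V" "y = V \<inter> L" by (auto simp: openin_subtopology)
  define I where "I u = {x\<in>{0..1}. psi x \<in> cyl u}" for u
  have "psi -` y \<inter> space R = (\<Union>u\<in>{u. cyl u \<subseteq> V}. I u)"
  proof -
    have "psi -` y \<inter> space R = {x\<in>{0..1}. psi x \<in> V}"
      using V(2) psi_props by (auto simp: space_R)
    also have "\<dots> = (\<Union>u\<in>{u. cyl u \<subseteq> V}. I u)"
    proof (intro equalityI subsetI)
      fix x assume "x \<in> {x\<in>{0..1}. psi x \<in> V}"
      then have x: "x \<in> {0..1}" "psi x \<in> (\<Union>u\<in>{u. cyl u \<subseteq> V}. cyl u)"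
        using open_Union_cyl[OF V(1)] by auto
      then obtain u where "cyl u \<subseteq> V" "psi x \<in> cyl u" by blast
      then show "x \<in> (\<Union>u\<in>{u. cyl u \<subseteq> V}. I u)" using x(1) unfolding I_def by blast
    next
      fix x assume "x \<in> (\<Union>u\<in>{u. cyl u \<subseteq> V}. I u)"
      then show "x \<in> {x\<in>{0..1}. psi x \<in> V}" unfolding I_def by blast
    qed
    finally show ?thesis .
  qed
  moreover have "I u \<in> sets R" for u
  proof -
    have "is_interval (I u)" unfolding is_interval_1
    proof (intro ballI allI impI)
      fix a b c assume ab: "a \<in> I u" "b \<in> I u" "a \<le> c \<and> c \<le> b"
      then have r: "0 \<le> a" "c \<le> 1" "0 \<le> c" "b \<le> 1" by (auto simp: I_def)
      have "lex_le (psi a) (psi c)" "lex_le (psi c) (psi b)"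
        using psi_mono r ab(3) by auto
      moreover have "\<forall>i<length u. psi a i = psi b i" using ab(1,2) by (auto simp: I_def cyl_def)
      ultimately have "\<forall>i<length u. psi c i = psi b i" using between_pref by blast
      then have "psi c \<in> cyl u" using ab(2) by (auto simp: I_def cyl_def)
      then show "c \<in> I u" using r by (simp add: I_def)
    qed
    then have "I u \<in> sets borel" by (rule real_interval_borel_measurable)
    then show ?thesis by (auto simp: sets_R_iff I_def)
  qed
  moreover have "(\<Union>u\<in>{u. cyl u \<subseteq> V}. I u) \<in> sets R"
    by (rule sets.countable_UN') (use \<open>\<And>u. I u \<in> sets R\<close> in auto)
  ultimately show "psi -` y \<inter> space R \<in> sets R" by simp
qed

lemma shift_meas: "shift_map \<in> measurable \<mu> \<mu>"
proof (rule measurable_sigma_sets[OF borel])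
  show "{U. openin (subtopology cantor_top L) U} \<subseteq> Pow L"
    using openin_subset by fastforce
  show "shift_map \<in> space \<mu> \<rightarrow> L" using shiftL by (auto simp: space)
  fix y assume "y \<in> {U. openin (subtopology cantor_top L) U}"
  then obtain V where V: "openin cantor_top V" "y = V \<inter> L" by (auto simp: openin_subtopology)
  have "shift_map -` y \<inter> space \<mu> = shift_map -` V \<inter> L"
    using V(2) shiftL by (auto simp: space)
  then show "shift_map -` y \<inter> space \<mu> \<in> sets \<mu>"
    using openL[OF open_shift_pre[OF V(1)]] by simp
qed

lemma T_meas: "T_L L \<mu> \<in> measurable R R"
proof -
  have "(\<lambda>x. \<phi> (shift_map (psi x))) \<in> measurable R R"
    by (rule measurable_comp[OF measurable_comp[OF psi_meas shift_meas] phi_meas01, unfolded comp_def])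
  moreover have "T_L L \<mu> = (\<lambda>x. \<phi> (shift_map (psi x)))" by (rule ext) (rule T_L_eq)
  ultimately show ?thesis by simp
qed

definition g where "g u = (THE w. w \<in> L \<inter> cyl u \<and> (\<forall>v\<in>L \<inter> cyl u. lex_le v w))"

definition C where "C = (\<Union>u. {g u} \<inter> L)"

lemma C_null: "C \<in> null_sets \<mu>"
  unfolding C_def
proof (rule null_sets_UN)
  fix u
  show "{g u} \<inter> L \<in> null_sets \<mu>"
  proof (cases "g u \<in> L")
    case True
    have e: "{g u} \<inter> L = {g u}" using True by auto
    show ?thesis using sing_sets[of "g u"] nonatomic True by (simp add: e null_sets_def)
  qed simp
qed

lemma psi_phi:
  assumes "w \<in> L" "w \<notin> C"
  shows "psi (\<phi> w) = w"
proof -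
  define p where "p = psi (\<phi> w)"
  have p: "p \<in> L" "\<phi> p = \<phi> w" "\<forall>v\<in>L. \<phi> v \<le> \<phi> w \<longrightarrow> lex_le v p"
    using psi_props[OF phi_ge0 phi_le1] unfolding p_def by blast+
  have wp: "lex_le w p" using p(3) assms(1) by simp
  show ?thesis unfolding p_def[symmetric]
  proof (rule ccontr)
    assume "p \<noteq> w"
    then have lt: "lex_less w p" using wp by (simp add: lex_le_def)
    then obtain n where n: "\<forall>i<n. w i = p i" "w n < p n" by (auto simp: lex_less_def)
    let ?u = "pref w (Suc n)"
    have wu: "w \<in> L \<inter> cyl ?u" using assms(1) by (simp add: mem_cyl_pref)
    have mx: "\<forall>v\<in>L \<inter> cyl ?u. lex_le v w"
    proof
      fix v assume v: "v \<in> L \<inter> cyl ?u"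
      then have vw: "\<forall>i<Suc n. v i = w i" by (simp add: mem_cyl_pref)
      show "lex_le v w"
      proof (rule ccontr)
        assume "\<not> lex_le v w"
        then have "lex_less w v" by (simp add: not_lex_le)
        moreover have "lex_less v p" unfolding lex_less_def using vw n
          by (intro exI[of _ n]) auto
        moreover have "v \<in> L" using v by simp
        ultimately have "\<phi> w < \<phi> p" using gap[OF assms(1) _ p(1)] by blast
        then show False using p(2) by linarith
      qed
    qed
    have "g ?u = w" unfolding g_def
    proof (rule the_equality)
      show "w \<in> L \<inter> cyl ?u \<and> (\<forall>v\<in>L \<inter> cyl ?u. lex_le v w)" using wu mx by simp
    next
      fix y assume y: "y \<in> L \<inter> cyl ?u \<and> (\<forall>v\<in>L \<inter> cyl ?u. lex_le v y)"
      then have "lex_le w y" using wu by blast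
      moreover have "lex_le y w" using mx y by blast
      ultimately show "y = w" by (rule lex_le_antisym[rotated])
    qed
    then have "w \<in> {g ?u} \<inter> L" using assms(1) by simp
    then have "w \<in> C" unfolding C_def by (rule UN_I[OF UNIV_I])
    then show False using assms(2) by simp
  qed
qed

end


context shiftsetup begin

lemma lborel01: "emeasure lborel {0..1::real} = 1" by simp

lemma distr_eq: "distr \<mu> R \<phi> = R"
proof -
  define N1 where "N1 = distr \<mu> borel \<phi>"
  define N2 where "N2 = uniform_measure lborel {0..1::real}"
  have rd1: "real_distribution N1" unfolding N1_def
    by (rule P.real_distribution_distr) (simp add: phi_meas)
  have rd2: "real_distribution N2" unfolding N2_def real_distribution_def real_distribution_axioms_def
    by (auto intro!: prob_space_uniform_measure)
  have cdf1: "cdf N1 x = measure \<mu> {v\<in>space \<mu>. \<phi> v \<le> x}" for x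
  proof -
    have "cdf N1 x = measure \<mu> (\<phi> -` {..x} \<inter> space \<mu>)"
      unfolding cdf_def2 N1_def by (rule measure_distr) (auto simp: phi_meas)
    also have "\<phi> -` {..x} \<inter> space \<mu> = {v\<in>space \<mu>. \<phi> v \<le> x}" by auto
    finally show ?thesis .
  qed
  have cdf2: "cdf N2 x = measure lborel ({0..1} \<inter> {..x})" for x
    unfolding cdf_def2 N2_def by (subst measure_uniform_measure) auto
  have "cdf N1 = cdf N2"
  proof
    fix x :: real
    show "cdf N1 x = cdf N2 x"
    proof (cases "x < 0")
      case True
      have e: "{v\<in>space \<mu>. \<phi> v \<le> x} = {}" using True phi_ge0
        by (auto simp: not_le intro: less_le_trans)
      have e2: "{0..1} \<inter> {..x} = ({}::real set)" using True by auto
      show ?thesis unfolding cdf1 cdf2 e e2 by simp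
    next
      case False
      show ?thesis
      proof (cases "1 \<le> x")
        case True
        have e: "{v\<in>space \<mu>. \<phi> v \<le> x} = space \<mu>" using True phi_le1 by (auto intro: order_trans)
        have e2: "{0..1} \<inter> {..x} = {0..1::real}" using True by auto
        show ?thesis unfolding cdf1 cdf2 e e2 by (simp add: P.prob_space)
      next
        case False2: False
        have e2: "{0..1} \<inter> {..x} = {0..x}" using False2 by auto
        show ?thesis unfolding cdf1 cdf2 e2 using False False2 cdf_phi[of x] by simp
      qed
    qed
  qed
  then have N: "N1 = N2" by (rule cdf_unique[OF rd1 rd2])
  show ?thesis
  proof (rule measure_eqI)
    show "sets (distr \<mu> R \<phi>) = sets R" by simp
    fix A assume A: "A \<in> sets (distr \<mu> R \<phi>)"
    then have AR: "A \<in> sets R" by simp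
    then have Ab: "A \<in> sets borel" "A \<subseteq> {0..1}" by (auto simp: sets_R_iff)
    have "emeasure (distr \<mu> R \<phi>) A = emeasure \<mu> (\<phi> -` A \<inter> space \<mu>)"
      by (rule emeasure_distr[OF phi_meas01 AR])
    also have "\<dots> = emeasure N1 A"
      unfolding N1_def by (rule emeasure_distr[symmetric]) (auto simp: phi_meas Ab)
    also have "\<dots> = emeasure N2 A" by (simp add: N)
    also have "\<dots> = emeasure lborel ({0..1} \<inter> A)"
      unfolding N2_def by (subst emeasure_uniform_measure) (auto simp: Ab divide_ennreal_def)
    also have "\<dots> = emeasure R A"
      using Ab by (subst emeasure_restrict_space) (auto simp: Int_absorb1)
    finally show "emeasure (distr \<mu> R \<phi>) A = emeasure R A" .
  qed
qed

lemma pres: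
  assumes B: "B \<in> sets R"
  shows "emeasure lborel (T_L L \<mu> -` B \<inter> {0..1}) = emeasure lborel B"
proof -
  have Bs: "B \<subseteq> {0..1}" "B \<in> sets borel" using B by (auto simp: sets_R_iff)
  have m: "\<phi> -` A \<inter> space \<mu> \<in> sets \<mu>" if "A \<in> sets R" for A
    by (rule measurable_sets[OF phi_meas01 that])
  have e_R: "emeasure lborel A = emeasure \<mu> (\<phi> -` A \<inter> space \<mu>)" if "A \<in> sets R" for A
  proof -
    have "A \<subseteq> {0..1}" using that by (auto simp: sets_R_iff)
    then have "emeasure lborel A = emeasure R A" by (subst emeasure_restrict_space) auto
    also have "\<dots> = emeasure (distr \<mu> R \<phi>) A" by (simp add: distr_eq)
    also have "\<dots> = emeasure \<mu> (\<phi> -` A \<inter> space \<mu>)" by (rule emeasure_distr[OF phi_meas01 that])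
    finally show ?thesis .
  qed
  have TB: "T_L L \<mu> -` B \<inter> {0..1} \<in> sets R"
    using measurable_sets[OF T_meas B] by (simp add: space_R)
  define A1 where "A1 = \<phi> -` (T_L L \<mu> -` B \<inter> {0..1}) \<inter> space \<mu>"
  define A2 where "A2 = \<phi> -` B \<inter> space \<mu>"
  define A3 where "A3 = shift_map -` A2 \<inter> L"
  have A1s: "A1 \<in> sets \<mu>" unfolding A1_def by (rule m[OF TB])
  have A2s: "A2 \<in> sets \<mu>" unfolding A2_def by (rule m[OF B])
  have A3s: "A3 \<in> sets \<mu>" unfolding A3_def
    using measurable_sets[OF shift_meas A2s] by (simp add: space)
  have "A1 - C = A3 - C"
  proof (intro equalityI subsetI)
    fix w assume w: "w \<in> A1 - C"
    then have wL: "w \<in> L" by (auto simp: A1_def space)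
    have "psi (\<phi> w) = w" using psi_phi[OF wL] w by simp
    then show "w \<in> A3 - C" using w wL shiftL[OF wL]
      by (auto simp: A1_def A3_def A2_def T_L_eq space)
  next
    fix w assume w: "w \<in> A3 - C"
    then have wL: "w \<in> L" by (auto simp: A3_def)
    have "psi (\<phi> w) = w" using psi_phi[OF wL] w by simp
    then show "w \<in> A1 - C" using w wL phi_ge0[of w] phi_le1[of w]
      by (auto simp: A1_def A3_def A2_def T_L_eq space)
  qed
  have "emeasure lborel (T_L L \<mu> -` B \<inter> {0..1}) = emeasure \<mu> A1"
    unfolding A1_def by (rule e_R[OF TB])
  also have "\<dots> = emeasure \<mu> (A1 - C)" by (rule emeasure_Diff_null_set[OF C_null A1s, symmetric])
  also have "\<dots> = emeasure \<mu> (A3 - C)" by (simp add: \<open>A1 - C = A3 - C\<close>)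
  also have "\<dots> = emeasure \<mu> A3" by (rule emeasure_Diff_null_set[OF C_null A3s])
  also have "\<dots> = emeasure \<mu> A2" unfolding A3_def using invariant A2s by blast
  also have "\<dots> = emeasure lborel B" unfolding A2_def by (rule e_R[OF B, symmetric])
  finally show ?thesis .
qed

end

theorem mainTheorem8:
  fixes L :: "(nat \<Rightarrow> 'a::{linorder,finite}) set"
    and \<mu> :: "(nat \<Rightarrow> 'a) measure"
  assumes shift: "is_shift L"
    and space: "space \<mu> = L"
    and borel: "sets \<mu> = sigma_sets L {U. openin (subtopology cantor_top L) U}"
    and prob: "prob_space \<mu>"
    and invariant: "\<forall>B\<in>sets \<mu>. emeasure \<mu> (shift_map -` B \<inter> L) = emeasure \<mu> B"
    and nonatomic: "\<forall>w\<in>L. emeasure \<mu> {w} = 0"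
    and regular: "regular_measure (subtopology cantor_top L) \<mu>"
    and pos_cyl: "\<forall>u. L \<inter> cyl u \<noteq> {} \<longrightarrow> emeasure \<mu> (L \<inter> cyl u) > 0"
  shows "distr \<mu> (restrict_space lborel {0..1}) (phi_mu L \<mu>) = restrict_space lborel {0..1}
    \<and> T_L L \<mu> \<in> measurable (restrict_space lborel {0..1}) (restrict_space lborel {0..1})
    \<and> (\<forall>B\<in>sets (restrict_space lborel {0..1::real}).
         emeasure lborel (T_L L \<mu> -` B \<inter> {0..1}) = emeasure lborel B)"
proof -
  interpret S: shiftsetup L \<mu>
    using shift space borel prob invariant nonatomic pos_cyl by (simp add: shiftsetup_def)
  show ?thesis using S.distr_eq S.T_meas S.pres by blast
qed


end
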